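(* In the split CP-RPCA sampling model described in the context, suppose the test location $(i_\ast,j_\ast)$ satisfies $(i_\ast,j_\ast)\mid\Omega_{\mathrm{obs}}\sim\mathrm{Unif}(\Omega_{\mathrm{obs}}^{c})$. Let $n_{\mathrm{cal}}=|\Omega_{\mathrm{cal}}'|$ and write $\Omega_{\mathrm{cal}}'\cup\{(i_\ast,j_\ast)\}=\{(i_1,j_1),\ldots,(i_{n_{\mathrm{cal}}+1},j_{n_{\mathrm{cal}}+1})\}$. Then for every $k\in\{1,\ldots,n_{\mathrm{cal}}+1\}$, $$\mathbb{P}\big\{(i_\ast,j_\ast)=(i_k,j_k)\ \big|\ \Omega_{\mathrm{cal}}'\cup\{(i_\ast,j_\ast)\}=\{(i_1,j_1),\ldots,(i_{n_{\mathrm{cal}}+1},j_{n_{\mathrm{cal}}+1})\},\ \Omega_{\mathrm{tr}}\big\}=\omega_{i_kj_k},$$ where $\omega_{i_kj_k}=h_{i_kj_k}\big/\sum_{k'=1}^{n_{\mathrm{cal}}+1}h_{i_{k'}j_{k'}}$ and $h_{ij}=(1-p_{ij})/p_{ij}$ are the odds ratios.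
   Context: Let $d_1,d_2\ge1$ and $[d]=\{1,\ldots,d\}$. Observation indicators $Z_{ij}\sim\mathrm{Bern}(p_{ij})$ are independent over $(i,j)\in[d_1]\times[d_2]$, with nonzero probabilities $p_{ij}$; the observed set is $\Omega_{\mathrm{obs}}=\{(i,j):Z_{ij}=1\}$ and $\Omega_{\mathrm{obs}}^c$ is its complement in $[d_1]\times[d_2]$. Given a splitting proportion $q\in(0,1)$, independent $W_{ij}\sim\mathrm{Bern}(q)$ (independent of $Z$) split the observed set into a training set $\Omega_{\mathrm{tr}}=\{(i,j)\in\Omega_{\mathrm{obs}}:W_{ij}=1\}$ and a calibration set $\Omega_{\mathrm{cal}}=\{(i,j)\in\Omega_{\mathrm{obs}}:W_{ij}=0\}$. In the paper's sampling model, each element of $\Omega_{\mathrm{cal}}$ is independently (of everything else) flagged as contaminated with probability $\beta\in(0,1)$ and discarded; the discarded elements form $\Omega_{\mathrm{drop}}$ and the remaining ones form the trimmed calibration set $\Omega_{\mathrm{cal}}'$, so $\Omega_{\mathrm{cal}}=\Omega_{\mathrm{cal}}'\cup\Omega_{\mathrm{drop}}$. *)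

theory Defs
  imports "HOL-Probability.Probability"
begin

type_synonym cell = "nat \<times> nat"
(* outcome: (Z, W, F, test location); F = contamination flags *)
type_synonym outcome = "(cell \<Rightarrow> bool) \<times> (cell \<Rightarrow> bool) \<times> (cell \<Rightarrow> bool) \<times> cell option"

definition grid :: "nat \<Rightarrow> nat \<Rightarrow> cell set" where
  "grid d1 d2 = {1..d1} \<times> {1..d2}"

definition odds :: "(cell \<Rightarrow> real) \<Rightarrow> cell \<Rightarrow> real" where
  "odds p c = (1 - p c) / p c"

definition obs_set :: "nat \<Rightarrow> nat \<Rightarrow> outcome \<Rightarrow> cell set" where
  "obs_set d1 d2 \<omega> = (case \<omega> of (Z, W, F, t) \<Rightarrow> {c \<in> grid d1 d2. Z c})"

definition tr_set :: "nat \<Rightarrow> nat \<Rightarrow> outcome \<Rightarrow> cell set" where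
  "tr_set d1 d2 \<omega> = (case \<omega> of (Z, W, F, t) \<Rightarrow> {c \<in> grid d1 d2. Z c \<and> W c})"

definition cal_set :: "nat \<Rightarrow> nat \<Rightarrow> outcome \<Rightarrow> cell set" where
  "cal_set d1 d2 \<omega> = (case \<omega> of (Z, W, F, t) \<Rightarrow> {c \<in> grid d1 d2. Z c \<and> \<not> W c})"

definition drop_set :: "nat \<Rightarrow> nat \<Rightarrow> outcome \<Rightarrow> cell set" where
  "drop_set d1 d2 \<omega> = (case \<omega> of (Z, W, F, t) \<Rightarrow> {c \<in> cal_set d1 d2 \<omega>. F c})"

definition trimmed_cal_set :: "nat \<Rightarrow> nat \<Rightarrow> outcome \<Rightarrow> cell set" where
  "trimmed_cal_set d1 d2 \<omega> = (case \<omega> of (Z, W, F, t) \<Rightarrow> {c \<in> cal_set d1 d2 \<omega>. \<not> F c})"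

definition test_loc :: "outcome \<Rightarrow> cell option" where
  "test_loc \<omega> = (case \<omega> of (Z, W, F, t) \<Rightarrow> t)"

definition test_loc_pmf :: "cell set \<Rightarrow> cell option pmf" where
  "test_loc_pmf C = (if C = {} then return_pmf None else map_pmf Some (pmf_of_set C))"

definition split_model :: "nat \<Rightarrow> nat \<Rightarrow> (cell \<Rightarrow> real) \<Rightarrow> real \<Rightarrow> real \<Rightarrow> outcome pmf" where
  "split_model d1 d2 p q \<beta> =
     bind_pmf (Pi_pmf (grid d1 d2) False (\<lambda>c. bernoulli_pmf (p c))) (\<lambda>Z.
     bind_pmf (Pi_pmf (grid d1 d2) False (\<lambda>_. bernoulli_pmf q)) (\<lambda>W.
     bind_pmf (Pi_pmf (grid d1 d2) False (\<lambda>_. bernoulli_pmf \<beta>)) (\<lambda>F.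
     bind_pmf (test_loc_pmf (grid d1 d2 - {c \<in> grid d1 d2. Z c})) (\<lambda>t.
     return_pmf (Z, W, F, t)))))"

(* conditioning event: \<Omega>_cal' \<union> {test} = S  and  \<Omega>_tr = T *)
definition cond_event :: "nat \<Rightarrow> nat \<Rightarrow> cell set \<Rightarrow> cell set \<Rightarrow> outcome set" where
  "cond_event d1 d2 S T = {\<omega>. (\<exists>t. test_loc \<omega> = Some t \<and> insert t (trimmed_cal_set d1 d2 \<omega>) = S)
                              \<and> tr_set d1 d2 \<omega> = T}"

end

theory Submission
  imports Defs
begin

lemma pmf_bind_Pair:
  "pmf (bind_pmf M (\<lambda>a. map_pmf (Pair a) (N a))) (a, b) = pmf M a * pmf (N a) b"
proof -
  have "pmf (bind_pmf M (\<lambda>a. map_pmf (Pair a) (N a))) (a, b)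
      = (\<integral>x. pmf (map_pmf (Pair x) (N x)) (a, b) \<partial>measure_pmf M)" by (rule pmf_bind)
  also have "\<dots> = (\<Sum>x\<in>{a}. pmf (map_pmf (Pair x) (N x)) (a, b) * pmf M x)"
  proof (rule integral_measure_pmf_real)
    fix x assume "x \<in> set_pmf M" "pmf (map_pmf (Pair x) (N x)) (a, b) \<noteq> 0"
    then show "x \<in> {a}"
    proof (cases "x = a")
      case False
      then have "Pair x -` {(a, b)} = {}" by auto
      then show ?thesis using \<open>pmf (map_pmf (Pair x) (N x)) (a, b) \<noteq> 0\<close>
        by (simp add: pmf_map)
    qed simp
  qed simp
  also have "\<dots> = pmf M a * pmf (N a) b"
    using pmf_map_inj'[of "Pair a" "N a" b] by (simp add: inj_on_def)
  finally show ?thesis .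
qed

lemma split_model_alt:
  "split_model d1 d2 p q \<beta> =
   bind_pmf (Pi_pmf (grid d1 d2) False (\<lambda>c. bernoulli_pmf (p c))) (\<lambda>Z. map_pmf (Pair Z)
   (bind_pmf (Pi_pmf (grid d1 d2) False (\<lambda>_. bernoulli_pmf q)) (\<lambda>W. map_pmf (Pair W)
   (bind_pmf (Pi_pmf (grid d1 d2) False (\<lambda>_. bernoulli_pmf \<beta>)) (\<lambda>F. map_pmf (Pair F)
   (test_loc_pmf (grid d1 d2 - {c \<in> grid d1 d2. Z c})))))))"
  unfolding split_model_def
  by (simp add: map_bind_pmf map_pmf_def bind_assoc_pmf bind_return_pmf)

lemma pmf_split:
  "pmf (split_model d1 d2 p q \<beta>) (Z, W, F, t) =
   pmf (Pi_pmf (grid d1 d2) False (\<lambda>c. bernoulli_pmf (p c))) Z *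
   (pmf (Pi_pmf (grid d1 d2) False (\<lambda>_. bernoulli_pmf q)) W *
   (pmf (Pi_pmf (grid d1 d2) False (\<lambda>_. bernoulli_pmf \<beta>)) F *
    pmf (test_loc_pmf (grid d1 d2 - {c \<in> grid d1 d2. Z c})) t))"
  unfolding split_model_alt by (simp add: pmf_bind_Pair)

lemma finite_grid[simp]: "finite (grid d1 d2)"
  by (simp add: grid_def)

lemma pmf_test_Some:
  "finite C \<Longrightarrow> pmf (test_loc_pmf C) (Some c) = (if c \<in> C then 1 / card C else 0)"
  unfolding test_loc_pmf_def
  using pmf_map_inj'[of Some "pmf_of_set C" c]
  by (auto simp: inj_on_def)

definition Dset :: "nat \<Rightarrow> nat \<Rightarrow> outcome set" where
  "Dset d1 d2 = {(Z,W,F,t). (\<forall>c. c \<notin> grid d1 d2 \<longrightarrow> \<not> Z c \<and> \<not> W c \<and> \<not> F c)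
      \<and> (\<forall>c. t = Some c \<longrightarrow> c \<in> grid d1 d2 \<and> \<not> Z c)}"

lemma finite_Dset: "finite (Dset d1 d2)"
proof -
  let ?P = "PiE_dflt (grid d1 d2) False (\<lambda>_. UNIV :: bool set)"
  have "Dset d1 d2 \<subseteq> ?P \<times> ?P \<times> ?P \<times> insert None (Some ` grid d1 d2)"
  proof
    fix \<omega> assume "\<omega> \<in> Dset d1 d2"
    then show "\<omega> \<in> ?P \<times> ?P \<times> ?P \<times> insert None (Some ` grid d1 d2)"
      by (cases \<omega>, rename_tac t, case_tac "snd (snd (snd \<omega>))") (auto simp: Dset_def PiE_dflt_def)
  qed
  moreover have "finite (?P \<times> ?P \<times> ?P \<times> insert None (Some ` grid d1 d2))"
    by (intro finite_cartesian_product finite_PiE_dflt) auto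
  ultimately show ?thesis by (rule finite_subset)
qed

lemma pmf_outside_Dset:
  assumes "\<omega> \<notin> Dset d1 d2"
  shows "pmf (split_model d1 d2 p q \<beta>) \<omega> = 0"
proof -
  obtain Z W F t where om: "\<omega> = (Z, W, F, t)" by (cases \<omega>) auto
  consider (a) c where "c \<notin> grid d1 d2" "Z c" | (b) c where "c \<notin> grid d1 d2" "W c"
    | (c) c where "c \<notin> grid d1 d2" "F c" | (d) c where "t = Some c" "c \<notin> grid d1 d2 - {c \<in> grid d1 d2. Z c}"
    using assms om unfolding Dset_def by auto
  then show ?thesis
  proof cases
    case a
    have "pmf (Pi_pmf (grid d1 d2) False (\<lambda>c. bernoulli_pmf (p c))) Z = 0"
      by (rule pmf_Pi_outside, simp, use a in blast)
    then show ?thesis unfolding om pmf_split by simp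
  next
    case b
    have "pmf (Pi_pmf (grid d1 d2) False (\<lambda>_. bernoulli_pmf q)) W = 0"
      by (rule pmf_Pi_outside, simp, use b in blast)
    then show ?thesis unfolding om pmf_split by simp
  next
    case c
    have "pmf (Pi_pmf (grid d1 d2) False (\<lambda>_. bernoulli_pmf \<beta>)) F = 0"
      by (rule pmf_Pi_outside, simp, use c in blast)
    then show ?thesis unfolding om pmf_split by simp
  next
    case d then show ?thesis unfolding om pmf_split by (simp add: pmf_test_Some)
  qed
qed

lemma prob_as_sum:
  "measure_pmf.prob (split_model d1 d2 p q \<beta>) A = sum (pmf (split_model d1 d2 p q \<beta>)) (A \<inter> Dset d1 d2)"
proof -
  have "measure_pmf.prob (split_model d1 d2 p q \<beta>) A = measure_pmf.prob (split_model d1 d2 p q \<beta>) (A \<inter> Dset d1 d2)"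
    by (rule measure_prob_cong_0) (auto intro: pmf_outside_Dset)
  also have "\<dots> = sum (pmf (split_model d1 d2 p q \<beta>)) (A \<inter> Dset d1 d2)"
    by (rule measure_measure_pmf_finite) (simp add: finite_Dset)
  finally show ?thesis .
qed

definition sw :: "cell \<Rightarrow> cell \<Rightarrow> cell \<Rightarrow> cell" where
  "sw x y c = (if c = x then y else if c = y then x else c)"

lemma sw_sw[simp]: "sw x y (sw x y c) = c" by (simp add: sw_def)
lemma sw_comm: "sw x y = sw y x" by (auto simp: sw_def fun_eq_iff)
lemma sw_x[simp]: "sw x y x = y" by (simp add: sw_def)
lemma sw_y[simp]: "sw x y y = x" by (simp add: sw_def)
lemma sw_other: "c \<noteq> x \<Longrightarrow> c \<noteq> y \<Longrightarrow> sw x y c = c" by (simp add: sw_def)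
lemma inj_sw: "inj (sw x y)" by (metis injI sw_sw)

lemma sw_image_fix: "(x \<in> A \<longleftrightarrow> y \<in> A) \<Longrightarrow> sw x y ` A = A"
  by (auto simp: sw_def image_iff)

lemma set_sw:
  assumes "x \<in> G" "y \<in> G"
  shows "{c \<in> G. Q (sw x y c)} = sw x y ` {c \<in> G. Q c}"
proof
  show "{c \<in> G. Q (sw x y c)} \<subseteq> sw x y ` {c \<in> G. Q c}"
  proof
    fix c assume c: "c \<in> {c \<in> G. Q (sw x y c)}"
    have "sw x y c \<in> G" using c assms by (auto simp: sw_def)
    then show "c \<in> sw x y ` {c \<in> G. Q c}" using c
      by (intro image_eqI[of _ _ "sw x y c"]) auto
  qed
  show "sw x y ` {c \<in> G. Q c} \<subseteq> {c \<in> G. Q (sw x y c)}"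
    using assms by (auto simp: sw_def)
qed

definition Psi :: "cell \<Rightarrow> cell \<Rightarrow> outcome \<Rightarrow> outcome" where
  "Psi x y \<omega> = (case \<omega> of (Z, W, F, t) \<Rightarrow> (Z \<circ> sw x y, W \<circ> sw x y, F \<circ> sw x y, map_option (sw x y) t))"

lemma Psi_Psi[simp]: "Psi x y (Psi x y \<omega>) = \<omega>"
  by (cases \<omega>) (simp add: Psi_def o_def option.map_comp option.map_ident)

lemma Psi_comm: "Psi x y = Psi y x"
  by (rule ext) (simp only: Psi_def sw_comm[of x y])

definition ExT :: "nat \<Rightarrow> nat \<Rightarrow> cell set \<Rightarrow> cell set \<Rightarrow> cell \<Rightarrow> outcome set" where
  "ExT d1 d2 S T x = cond_event d1 d2 S T \<inter> {\<omega>. test_loc \<omega> = Some x}"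

lemma trimmed_eq: "trimmed_cal_set d1 d2 (Z, W, F, t) = {c \<in> grid d1 d2. Z c \<and> \<not> W c \<and> \<not> F c}"
  by (auto simp: trimmed_cal_set_def cal_set_def)

lemma mem_Ex: "(Z, W, F, t) \<in> ExT d1 d2 S T x \<longleftrightarrow>
   t = Some x \<and> insert x {c \<in> grid d1 d2. Z c \<and> \<not> W c \<and> \<not> F c} = S \<and> {c \<in> grid d1 d2. Z c \<and> W c} = T"
  by (auto simp: ExT_def cond_event_def test_loc_def trimmed_eq tr_set_def simp del: split_paired_Ex)

lemma Psi_maps:
  assumes om: "\<omega> \<in> ExT d1 d2 S T x \<inter> Dset d1 d2" and y: "y \<in> S"
  shows "Psi x y \<omega> \<in> ExT d1 d2 S T y \<inter> Dset d1 d2"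
proof -
  obtain Z W F t where omd: "\<omega> = (Z, W, F, t)" by (cases \<omega>) auto
  let ?G = "grid d1 d2"
  let ?s = "sw x y"
  have t: "t = Some x" and S: "insert x {c \<in> ?G. Z c \<and> \<not> W c \<and> \<not> F c} = S"
    and T: "{c \<in> ?G. Z c \<and> W c} = T"
    using om unfolding omd Int_iff mem_Ex by auto
  have D: "\<forall>c. c \<notin> ?G \<longrightarrow> \<not> Z c \<and> \<not> W c \<and> \<not> F c" "\<forall>c. t = Some c \<longrightarrow> c \<in> ?G \<and> \<not> Z c"
    using om unfolding omd Dset_def by auto
  have xG: "x \<in> ?G" and Zx: "\<not> Z x" using D t by auto
  have yG: "y \<in> ?G" using y S xG by auto
  have xT: "x \<notin> T" using T Zx by auto
  have yT: "y \<notin> T" using y S T xT by auto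
  have sS: "?s ` S = S" using y S by (intro sw_image_fix) auto
  have sT: "?s ` T = T" using xT yT by (intro sw_image_fix) auto
  have "insert y {c \<in> ?G. (Z \<circ> ?s) c \<and> \<not> (W \<circ> ?s) c \<and> \<not> (F \<circ> ?s) c}
       = insert (?s x) (?s ` {c \<in> ?G. Z c \<and> \<not> W c \<and> \<not> F c})"
    using set_sw[OF xG yG, of "\<lambda>c. Z c \<and> \<not> W c \<and> \<not> F c"] by simp
  also have "\<dots> = ?s ` S" using S by auto
  finally have S': "insert y {c \<in> ?G. (Z \<circ> ?s) c \<and> \<not> (W \<circ> ?s) c \<and> \<not> (F \<circ> ?s) c} = S"
    using sS by simp
  have "{c \<in> ?G. (Z \<circ> ?s) c \<and> (W \<circ> ?s) c} = ?s ` T"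
    using set_sw[OF xG yG, of "\<lambda>c. Z c \<and> W c"] T by simp
  then have T': "{c \<in> ?G. (Z \<circ> ?s) c \<and> (W \<circ> ?s) c} = T" using sT by simp
  have "Psi x y \<omega> = (Z \<circ> ?s, W \<circ> ?s, F \<circ> ?s, Some y)"
    unfolding omd t Psi_def by simp
  moreover have "(Z \<circ> ?s, W \<circ> ?s, F \<circ> ?s, Some y) \<in> ExT d1 d2 S T y"
    unfolding mem_Ex using S' T' by simp
  moreover have "(Z \<circ> ?s, W \<circ> ?s, F \<circ> ?s, Some y) \<in> Dset d1 d2"
    using D xG yG Zx unfolding Dset_def by (auto simp: sw_def)
  ultimately show ?thesis by simp
qed

lemma Ex_facts:
  assumes om: "(Z, W, F, t) \<in> ExT d1 d2 S T x \<inter> Dset d1 d2" and y: "y \<in> S"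
  shows "t = Some x" "x \<in> grid d1 d2" "y \<in> grid d1 d2" "\<not> Z x" "y \<noteq> x \<Longrightarrow> Z y"
    "S \<subseteq> grid d1 d2"
    "\<forall>c. c \<notin> grid d1 d2 \<longrightarrow> \<not> Z c \<and> \<not> W c \<and> \<not> F c"
proof -
  have t: "t = Some x" and S: "S = insert x {c \<in> grid d1 d2. Z c \<and> \<not> W c \<and> \<not> F c}"
    using om unfolding Int_iff mem_Ex by auto
  have D1: "\<forall>c. c \<notin> grid d1 d2 \<longrightarrow> \<not> Z c \<and> \<not> W c \<and> \<not> F c"
    and D2: "\<forall>c. t = Some c \<longrightarrow> c \<in> grid d1 d2 \<and> \<not> Z c"
    using om unfolding Int_iff Dset_def by simp_all
  show "t = Some x" by (rule t)
  show xg: "x \<in> grid d1 d2" using D2 t by blast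
  show "\<not> Z x" using D2 t by blast
  show "S \<subseteq> grid d1 d2" using S xg by blast
  then show "y \<in> grid d1 d2" using y by blast
  show "y \<noteq> x \<Longrightarrow> Z y" using S y by blast
  show "\<forall>c. c \<notin> grid d1 d2 \<longrightarrow> \<not> Z c \<and> \<not> W c \<and> \<not> F c" by (rule D1)
qed

lemma prod_two:
  assumes "finite G" "x \<in> G" "y \<in> G" "x \<noteq> y"
  shows "(\<Prod>c\<in>G. f c) = f x * f y * (\<Prod>c\<in>G - {x, y}. f c)"
proof -
  have "(\<Prod>c\<in>G. f c) = f x * (\<Prod>c\<in>G - {x}. f c)" using assms by (simp add: prod.remove)
  also have "(\<Prod>c\<in>G - {x}. f c) = f y * (\<Prod>c\<in>G - {x} - {y}. f c)"
    using assms by (intro prod.remove) auto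
  moreover have "G - {x} - {y} = G - {x, y}" by auto
  ultimately show ?thesis by (simp add: mult.assoc)
qed

lemma prod_sw:
  assumes "x \<in> G" "y \<in> G"
  shows "(\<Prod>c\<in>G. h (sw x y c)) = (\<Prod>c\<in>G. (h c :: real))"
  by (rule prod.reindex_bij_witness[of _ "sw x y" "sw x y"]) (use assms in \<open>auto simp: sw_def\<close>)

lemma pmf_Psi:
  assumes om: "\<omega> \<in> ExT d1 d2 S T x \<inter> Dset d1 d2" and y: "y \<in> S" and xy: "x \<noteq> y"
    and p: "\<forall>c \<in> grid d1 d2. 0 < p c \<and> p c \<le> 1"
    and q: "0 \<le> q" "q \<le> 1" and b: "0 \<le> \<beta>" "\<beta> \<le> 1"
  shows "pmf (split_model d1 d2 p q \<beta>) (Psi x y \<omega>) * ((1 - p x) * p y)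
       = pmf (split_model d1 d2 p q \<beta>) \<omega> * (p x * (1 - p y))"
proof -
  obtain Z W F t where omd: "\<omega> = (Z, W, F, t)" by (cases \<omega>) auto
  let ?G = "grid d1 d2"
  let ?s = "sw x y"
  note f = Ex_facts[OF om[unfolded omd] y]
  have Zy: "Z y" using f(5) xy by auto
  have dfl: "\<And>c. c \<notin> ?G \<Longrightarrow> ?s c = c" using f(2,3) by (auto simp: sw_def)
  have Psi: "Psi x y \<omega> = (Z \<circ> ?s, W \<circ> ?s, F \<circ> ?s, Some y)"
    unfolding omd f(1) Psi_def by simp
  define g where "g c b = pmf (bernoulli_pmf (p c)) b" for c b
  have PZ: "pmf (Pi_pmf ?G False (\<lambda>c. bernoulli_pmf (p c))) Z = (\<Prod>c\<in>?G. g c (Z c))"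
    using f(7) unfolding g_def by (intro pmf_Pi') auto
  have PZ': "pmf (Pi_pmf ?G False (\<lambda>c. bernoulli_pmf (p c))) (Z \<circ> ?s) = (\<Prod>c\<in>?G. g c (Z (?s c)))"
    using f(7) dfl unfolding g_def by (subst pmf_Pi') auto
  have rest: "(\<Prod>c\<in>?G - {x, y}. g c (Z (?s c))) = (\<Prod>c\<in>?G - {x, y}. g c (Z c))"
    by (intro prod.cong) (auto simp: sw_def)
  have gx: "g x False = 1 - p x" "g x True = p x" using p f(2) by (auto simp: g_def)
  have gy: "g y False = 1 - p y" "g y True = p y" using p f(3) by (auto simp: g_def)
  have Z1: "pmf (Pi_pmf ?G False (\<lambda>c. bernoulli_pmf (p c))) (Z \<circ> ?s) * ((1 - p x) * p y)
     = pmf (Pi_pmf ?G False (\<lambda>c. bernoulli_pmf (p c))) Z * (p x * (1 - p y))"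
    unfolding PZ PZ' prod_two[OF finite_grid f(2,3) xy, of "\<lambda>c. g c (Z c)"]
      prod_two[OF finite_grid f(2,3) xy, of "\<lambda>c. g c (Z (?s c))"] rest
    using f(4) Zy gx gy by simp
  have PW: "pmf (Pi_pmf ?G False (\<lambda>_. bernoulli_pmf q)) (W \<circ> ?s) = pmf (Pi_pmf ?G False (\<lambda>_. bernoulli_pmf q)) W"
    using f(7) dfl prod_sw[OF f(2,3), of "\<lambda>c. pmf (bernoulli_pmf q) (W c)"]
    by (subst (1 2) pmf_Pi') auto
  have PF: "pmf (Pi_pmf ?G False (\<lambda>_. bernoulli_pmf \<beta>)) (F \<circ> ?s) = pmf (Pi_pmf ?G False (\<lambda>_. bernoulli_pmf \<beta>)) F"
    using f(7) dfl prod_sw[OF f(2,3), of "\<lambda>c. pmf (bernoulli_pmf \<beta>) (F c)"]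
    by (subst (1 2) pmf_Pi') auto
  have C: "?G - {c \<in> ?G. (Z \<circ> ?s) c} = ?s ` (?G - {c \<in> ?G. Z c})"
  proof -
    have "?G - {c \<in> ?G. (Z \<circ> ?s) c} = {c \<in> ?G. \<not> Z (?s c)}" by auto
    also have "\<dots> = ?s ` {c \<in> ?G. \<not> Z c}" by (rule set_sw[OF f(2,3)])
    also have "{c \<in> ?G. \<not> Z c} = ?G - {c \<in> ?G. Z c}" by auto
    finally show ?thesis .
  qed
  have PT: "pmf (test_loc_pmf (?G - {c \<in> ?G. (Z \<circ> ?s) c})) (Some y)
      = pmf (test_loc_pmf (?G - {c \<in> ?G. Z c})) (Some x)"
  proof -
    let ?C = "?G - {c \<in> ?G. Z c}"
    have fin: "finite ?C" by simp
    have xC: "x \<in> ?C" using f(2,4) by simp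
    have yC: "y \<in> ?s ` ?C" using xC by (intro image_eqI[of _ _ x]) simp_all
    have card: "card (?s ` ?C) = card ?C" by (rule card_image) (meson inj_sw inj_on_subset subset_UNIV)
    show ?thesis unfolding C
      using fin xC yC card by (simp add: pmf_test_Some)
  qed
  define R where "R = pmf (Pi_pmf ?G False (\<lambda>_. bernoulli_pmf q)) W *
     (pmf (Pi_pmf ?G False (\<lambda>_. bernoulli_pmf \<beta>)) F * pmf (test_loc_pmf (?G - {c \<in> ?G. Z c})) (Some x))"
  have e1: "pmf (split_model d1 d2 p q \<beta>) (Psi x y \<omega>) = pmf (Pi_pmf ?G False (\<lambda>c. bernoulli_pmf (p c))) (Z \<circ> ?s) * R"
    unfolding Psi pmf_split PW PF PT R_def ..
  have e2: "pmf (split_model d1 d2 p q \<beta>) \<omega> = pmf (Pi_pmf ?G False (\<lambda>c. bernoulli_pmf (p c))) Z * R"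
    unfolding omd f(1) pmf_split R_def ..
  show ?thesis unfolding e1 e2
  proof -
    let ?A = "pmf (Pi_pmf ?G False (\<lambda>c. bernoulli_pmf (p c))) (Z \<circ> ?s)"
    let ?B = "pmf (Pi_pmf ?G False (\<lambda>c. bernoulli_pmf (p c))) Z"
    have "?A * R * ((1 - p x) * p y) = (?A * ((1 - p x) * p y)) * R" by (simp only: ac_simps)
    also have "\<dots> = (?B * (p x * (1 - p y))) * R" using Z1 by simp
    also have "\<dots> = ?B * R * (p x * (1 - p y))" by (simp only: ac_simps)
    finally show "?A * R * ((1 - p x) * p y) = ?B * R * (p x * (1 - p y))" .
  qed
qed

lemma sum_rel:
  assumes x: "x \<in> S" and y: "y \<in> S" and xy: "x \<noteq> y"
    and p: "\<forall>c \<in> grid d1 d2. 0 < p c \<and> p c \<le> 1"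
    and q: "0 \<le> q" "q \<le> 1" and b: "0 \<le> \<beta>" "\<beta> \<le> 1"
  shows "measure_pmf.prob (split_model d1 d2 p q \<beta>) (ExT d1 d2 S T y) * ((1 - p x) * p y)
       = measure_pmf.prob (split_model d1 d2 p q \<beta>) (ExT d1 d2 S T x) * (p x * (1 - p y))"
proof -
  let ?M = "split_model d1 d2 p q \<beta>"
  have "(\<Sum>\<omega>\<in>ExT d1 d2 S T x \<inter> Dset d1 d2. pmf ?M (Psi x y \<omega>)) = (\<Sum>\<omega>\<in>ExT d1 d2 S T y \<inter> Dset d1 d2. pmf ?M \<omega>)"
  proof (rule sum.reindex_bij_witness[of _ "Psi x y" "Psi x y"])
    fix a assume "a \<in> ExT d1 d2 S T x \<inter> Dset d1 d2"
    then show "Psi x y (Psi x y a) = a" "Psi x y a \<in> ExT d1 d2 S T y \<inter> Dset d1 d2"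
      using Psi_maps[of a d1 d2 S T x y] y by simp_all
  next
    fix b assume "b \<in> ExT d1 d2 S T y \<inter> Dset d1 d2"
    then show "Psi x y (Psi x y b) = b" "Psi x y b \<in> ExT d1 d2 S T x \<inter> Dset d1 d2"
      using Psi_maps[of b d1 d2 S T y x] x Psi_comm[of x y] by simp_all
  qed simp
  then have "measure_pmf.prob ?M (ExT d1 d2 S T y) * ((1 - p x) * p y)
     = (\<Sum>\<omega>\<in>ExT d1 d2 S T x \<inter> Dset d1 d2. pmf ?M (Psi x y \<omega>) * ((1 - p x) * p y))"
    unfolding prob_as_sum sum_distrib_right[symmetric] by simp
  also have "\<dots> = (\<Sum>\<omega>\<in>ExT d1 d2 S T x \<inter> Dset d1 d2. pmf ?M \<omega> * (p x * (1 - p y)))"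
    by (rule sum.cong[OF refl], rule pmf_Psi[OF _ y xy p q b])
  also have "\<dots> = measure_pmf.prob ?M (ExT d1 d2 S T x) * (p x * (1 - p y))"
    by (simp add: prob_as_sum sum_distrib_right)
  finally show ?thesis .
qed

lemma prob_zero:
  assumes y: "y \<in> S" and py: "p y = 1"
  shows "measure_pmf.prob (split_model d1 d2 p q \<beta>) (ExT d1 d2 S T y) = 0"
proof -
  have "pmf (split_model d1 d2 p q \<beta>) \<omega> = 0" if om: "\<omega> \<in> ExT d1 d2 S T y \<inter> Dset d1 d2" for \<omega>
  proof -
    obtain Z W F t where omd: "\<omega> = (Z, W, F, t)" by (cases \<omega>) auto
    note f = Ex_facts[OF om[unfolded omd] y]
    have "pmf (Pi_pmf (grid d1 d2) False (\<lambda>c. bernoulli_pmf (p c))) Z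
        = (\<Prod>c\<in>grid d1 d2. pmf (bernoulli_pmf (p c)) (Z c))"
      using f(7) by (intro pmf_Pi') auto
    also have "\<dots> = 0"
      using f(2,4) py by (intro prod_zero) (auto intro!: bexI[of _ y])
    finally show ?thesis unfolding omd pmf_split by simp
  qed
  then show ?thesis by (simp add: prob_as_sum)
qed

theorem lemma1:
  fixes d1 d2 :: nat and p :: "cell \<Rightarrow> real" and q \<beta> :: real
    and S T :: "cell set" and x :: cell
  assumes "d1 \<ge> 1" and "d2 \<ge> 1"
    and "\<forall>c \<in> grid d1 d2. 0 < p c \<and> p c \<le> 1"
    and "0 < q" and "q < 1" and "0 < \<beta>" and "\<beta> < 1"
    and "x \<in> S"
    and "measure_pmf.prob (split_model d1 d2 p q \<beta>) (cond_event d1 d2 S T) > 0"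
  shows "measure_pmf.prob (split_model d1 d2 p q \<beta>)
           (cond_event d1 d2 S T \<inter> {\<omega>. test_loc \<omega> = Some x})
         / measure_pmf.prob (split_model d1 d2 p q \<beta>) (cond_event d1 d2 S T)
         = odds p x / (\<Sum>y\<in>S. odds p y)"
proof -
  let ?M = "split_model d1 d2 p q \<beta>"
  let ?E = "cond_event d1 d2 S T"
  let ?G = "grid d1 d2"
  define P where "P y = measure_pmf.prob ?M (ExT d1 d2 S T y)" for y
  note p = assms(3)
  have q: "0 \<le> q" "q \<le> 1" and b: "0 \<le> \<beta>" "\<beta> \<le> 1" using assms(4-7) by simp_all
  have PE: "measure_pmf.prob ?M ?E = sum (pmf ?M) (?E \<inter> Dset d1 d2)" by (rule prob_as_sum)
  have "?E \<inter> Dset d1 d2 \<noteq> {}" proof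
    assume "?E \<inter> Dset d1 d2 = {}"
    then show False using assms(9) PE by simp
  qed
  then obtain \<omega>0 where om0: "\<omega>0 \<in> ?E \<inter> Dset d1 d2" by blast
  then obtain t0 where t0: "test_loc \<omega>0 = Some t0" "insert t0 (trimmed_cal_set d1 d2 \<omega>0) = S"
    unfolding cond_event_def by blast
  have t0S: "t0 \<in> S" using t0 by blast
  have "\<omega>0 \<in> ExT d1 d2 S T t0 \<inter> Dset d1 d2" using om0 t0 unfolding ExT_def by blast
  then have SG: "S \<subseteq> ?G"
  proof -
    assume a: "\<omega>0 \<in> ExT d1 d2 S T t0 \<inter> Dset d1 d2"
    obtain Z W F t where "\<omega>0 = (Z, W, F, t)" by (cases \<omega>0) auto
    then show ?thesis using Ex_facts(6)[OF _ t0S] a by blast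
  qed
  have finS: "finite S" using SG finite_subset finite_grid by blast
  have pS: "\<And>y. y \<in> S \<Longrightarrow> 0 < p y \<and> p y \<le> 1" using SG p by blast
  have union: "?E \<inter> Dset d1 d2 = (\<Union>y\<in>S. ExT d1 d2 S T y \<inter> Dset d1 d2)"
  proof
    show "?E \<inter> Dset d1 d2 \<subseteq> (\<Union>y\<in>S. ExT d1 d2 S T y \<inter> Dset d1 d2)"
    proof
      fix \<omega> assume a: "\<omega> \<in> ?E \<inter> Dset d1 d2"
      then obtain t where "test_loc \<omega> = Some t" "insert t (trimmed_cal_set d1 d2 \<omega>) = S"
        unfolding cond_event_def by blast
      then show "\<omega> \<in> (\<Union>y\<in>S. ExT d1 d2 S T y \<inter> Dset d1 d2)"
        using a unfolding ExT_def by blast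
    qed
    show "(\<Union>y\<in>S. ExT d1 d2 S T y \<inter> Dset d1 d2) \<subseteq> ?E \<inter> Dset d1 d2"
      unfolding ExT_def by blast
  qed
  have "measure_pmf.prob ?M ?E = (\<Sum>y\<in>S. sum (pmf ?M) (ExT d1 d2 S T y \<inter> Dset d1 d2))"
    unfolding PE union
  proof (rule sum.UNION_disjoint[OF finS])
    show "\<forall>y\<in>S. finite (ExT d1 d2 S T y \<inter> Dset d1 d2)"
      by (meson Int_lower2 finite_Dset finite_subset)
    show "\<forall>i\<in>S. \<forall>j\<in>S. i \<noteq> j \<longrightarrow> (ExT d1 d2 S T i \<inter> Dset d1 d2) \<inter> (ExT d1 d2 S T j \<inter> Dset d1 d2) = {}"
      unfolding ExT_def by force
  qed
  then have PEs: "measure_pmf.prob ?M ?E = (\<Sum>y\<in>S. P y)"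
    by (simp only: P_def prob_as_sum)
  have rel: "P y * odds p x = P x * odds p y" if y: "y \<in> S" for y
  proof (cases "y = x")
    case False
    have r: "P y * ((1 - p x) * p y) = P x * (p x * (1 - p y))"
      unfolding P_def by (rule sum_rel[OF assms(8) y _ p q b]) (use False in auto)
    have px: "p x > 0" and py: "p y > 0" using pS assms(8) y by auto
    have "P y * odds p x = P y * ((1 - p x) * p y) / (p x * p y)"
      using px py by (simp add: odds_def field_simps)
    also have "\<dots> = P x * (p x * (1 - p y)) / (p x * p y)" by (simp only: r)
    also have "\<dots> = P x * odds p y"
      using px py by (simp add: odds_def field_simps)
    finally show ?thesis .
  qed simp
  have key: "measure_pmf.prob ?M ?E * odds p x = P x * (\<Sum>y\<in>S. odds p y)"
    unfolding PEs sum_distrib_right sum_distrib_left by (rule sum.cong[OF refl], rule rel)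
  have hnn: "\<And>y. y \<in> S \<Longrightarrow> odds p y \<ge> 0"
    using pS unfolding odds_def by (meson divide_nonneg_pos diff_ge_0_iff_ge)
  have sne: "(\<Sum>y\<in>S. odds p y) \<noteq> 0"
  proof
    assume s0: "(\<Sum>y\<in>S. odds p y) = 0"
    have "\<forall>y\<in>S. odds p y = 0" using sum_nonneg_eq_0_iff[OF finS] hnn s0 by blast
    then have "\<forall>y\<in>S. p y = 1" using pS unfolding odds_def by fastforce
    then have "\<forall>y\<in>S. P y = 0" unfolding P_def using prob_zero by blast
    then have "measure_pmf.prob ?M ?E = 0" using PEs by simp
    then show False using assms(9) by simp
  qed
  have k2: "P x * (\<Sum>y\<in>S. odds p y) = odds p x * measure_pmf.prob ?M ?E"
    using key by (simp only: mult.commute)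
  have "P x / measure_pmf.prob ?M ?E = odds p x / (\<Sum>y\<in>S. odds p y)"
    using k2 sne assms(9) by (simp add: frac_eq_eq)
  then show ?thesis unfolding P_def ExT_def .
qed

end
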